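(* Let $\lambda\in\mathbb{C}\setminus\{\pm\pi i\}$ and let $N_\lambda$ be the Newton map of $F_\lambda(z)=e^{\lambda z}\sin\pi z$. Its exponential projection $g_\lambda$, given by $$g_\lambda(w)=we^{2\pi iM_\lambda(w)},\qquad M_\lambda(w)=-\frac{w-1}{(\lambda+\pi i)w-(\lambda-\pi i)},$$ has a unique essential singularity at $B_\lambda=\frac{\lambda-\pi i}{\lambda+\pi i}$. Moreover: (i) the set of fixed points of $g_\lambda$ consists of $0$ and $\infty$, with multipliers $g_\lambda'(0)=\exp\!\big(\frac{2\pi i}{\pi i-\lambda}\big)$ and $g_\lambda'(\infty)=\exp\!\big(\frac{2\pi i}{\pi i+\lambda}\big)$, and, for $\sigma\in\mathbb{Z}$, the points $w^*_\sigma=\frac{1+(\lambda-\pi i)\sigma}{1+(\lambda+\pi i)\sigma}$, with $g_\lambda'(w^*_\sigma)=1-\big(1+(\lambda-\pi i)\sigma\big)\big(1+(\lambda+\pi i)\sigma\big)$; (ii) the set of singular values of $g_\lambda$ consists of the fixed asymptotic values $0$ and $\infty$, the fixed critical point $w^*_0=1$, and the image of the only free critical point $C_\lambda=B_\lambda^2$.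
   Context: The exponential projection $g_\lambda$ satisfies $g_\lambda(e^{2\pi iz})=e^{2\pi iN_\lambda(z)}$; here $N_\lambda(z)=z+M_\lambda(e^{2\pi iz})$. The multiplier at $\infty$ is the derivative in the local coordinate $1/w$. Singular values are the closure of the set of critical values and asymptotic values (limits of $g_\lambda$ along paths tending to an essential singularity). *)

theory Defs
  imports "HOL-Complex_Analysis.Complex_Analysis"
begin

definition M_lam :: "complex \<Rightarrow> complex \<Rightarrow> complex" where
  "M_lam l w = - (w - 1) / ((l + pi * \<i>) * w - (l - pi * \<i>))"

definition g_lam :: "complex \<Rightarrow> complex \<Rightarrow> complex" where
  "g_lam l w = w * exp (2 * pi * \<i> * M_lam l w)"

definition B_lam :: "complex \<Rightarrow> complex" where
  "B_lam l = (l - pi * \<i>) / (l + pi * \<i>)"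

definition wstar :: "complex \<Rightarrow> int \<Rightarrow> complex" where
  "wstar l s = (1 + (l - pi * \<i>) * of_int s) / (1 + (l + pi * \<i>) * of_int s)"

text \<open>Expression of f in the local coordinate 1/w at infinity (for f with f(infinity) = infinity).\<close>
definition chart_inf :: "(complex \<Rightarrow> complex) \<Rightarrow> complex \<Rightarrow> complex" where
  "chart_inf f z = (if z = 0 then 0 else inverse (f (inverse z)))"

definition critical_values :: "(complex \<Rightarrow> complex) \<Rightarrow> complex set \<Rightarrow> complex set" where
  "critical_values f S = {f w | w. w \<in> S \<and> deriv f w = 0}"

definition asymptotic_value :: "(complex \<Rightarrow> complex) \<Rightarrow> complex \<Rightarrow> complex \<Rightarrow> bool" where
  "asymptotic_value f s a \<longleftrightarrow>
     (\<exists>\<gamma>::real \<Rightarrow> complex. continuous_on {0..<1} \<gamma> \<and> \<gamma> ` {0..<1} \<subseteq> - {s} \<and>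
        (\<gamma> \<longlongrightarrow> s) (at_left 1) \<and> ((f \<circ> \<gamma>) \<longlongrightarrow> a) (at_left 1))"

definition asymptotic_value_inf :: "(complex \<Rightarrow> complex) \<Rightarrow> complex \<Rightarrow> bool" where
  "asymptotic_value_inf f s \<longleftrightarrow>
     (\<exists>\<gamma>::real \<Rightarrow> complex. continuous_on {0..<1} \<gamma> \<and> \<gamma> ` {0..<1} \<subseteq> - {s} \<and>
        (\<gamma> \<longlongrightarrow> s) (at_left 1) \<and> filterlim (f \<circ> \<gamma>) at_infinity (at_left 1))"

text \<open>Singular values (closure in the Riemann sphere of critical and asymptotic values),
  for a map f defined on (C \<union> {infinity}) - {s}, holomorphic on the finite part S,
  fixing infinity.\<close>
definition singular_values_fin :: "(complex \<Rightarrow> complex) \<Rightarrow> complex set \<Rightarrow> complex \<Rightarrow> complex set" where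
  "singular_values_fin f S s = closure (critical_values f S \<union> {a. asymptotic_value f s a})"

definition infinity_singular :: "(complex \<Rightarrow> complex) \<Rightarrow> complex set \<Rightarrow> complex \<Rightarrow> bool" where
  "infinity_singular f S s \<longleftrightarrow>
     deriv (chart_inf f) 0 = 0 \<or> asymptotic_value_inf f s \<or>
     \<not> bounded (critical_values f S \<union> {a. asymptotic_value f s a})"

end

theory Submission
  imports Defs
begin


lemma alg1: fixes a b w :: complex
  assumes "a \<noteq> 0" "a * w - b \<noteq> 0"
  shows "- (w - 1) / (a * w - b) = - 1 / a + (a - b) / (a^2 * (w - b / a))"
proof -
  have e: "a^2 * (w - b/a) = a * (a * w - b)" using assms by (simp add: field_simps power2_eq_square)
  have "- (w - 1) / (a * w - b) = - 1 / a + (a - b) / (a * (a * w - b))"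
    using assms by (simp add: divide_simps) (simp add: algebra_simps)
  then show ?thesis by (simp only: e)
qed






lemma lim_1mt: "filterlim (\<lambda>t::real. 1 - t) (at_right 0) (at_left 1)"
  unfolding filterlim_at
proof
  show "\<forall>\<^sub>F x in at_left (1::real). 1 - x \<in> {0<..} \<and> 1 - x \<noteq> 0"
  proof -
    have "eventually (\<lambda>x::real. x \<in> {0<..<1}) (at_left 1)" by (rule eventually_at_left_real) simp
    then show ?thesis by (rule eventually_mono) simp
  qed
  have "((\<lambda>t::real. 1 - t) \<longlongrightarrow> 1 - 1) (at_left 1)"
    by (intro tendsto_intros)
  then show "((\<lambda>t::real. 1 - t) \<longlongrightarrow> 0) (at_left 1)" by simp
qed

lemma lim_pos: "filterlim (\<lambda>t::real. 4 * pi^2 / (1 - t)) at_top (at_left 1)"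
proof -
  have h: "filterlim (\<lambda>t::real. inverse (1 - t)) at_top (at_left 1)"
    by (rule filterlim_compose[OF filterlim_inverse_at_top_right lim_1mt])
  have "filterlim (\<lambda>t::real. 4 * pi^2 * inverse (1 - t)) at_top (at_left 1)"
    by (rule filterlim_tendsto_pos_mult_at_top[OF tendsto_const _ h, of "4 * pi^2"]) simp
  then show ?thesis by (simp add: divide_inverse)
qed

lemma lim_exp_neg: "((\<lambda>t::real. exp (- (4 * pi^2 / (1 - t)))) \<longlongrightarrow> 0) (at_left 1)"
  by (rule filterlim_compose[OF exp_at_bot filterlim_compose[OF filterlim_uminus_at_bot_at_top lim_pos]])

lemma lim_exp_pos: "filterlim (\<lambda>t::real. exp (4 * pi^2 / (1 - t))) at_top (at_left 1)"
  by (rule filterlim_compose[OF exp_at_top lim_pos])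

lemma path_at: fixes \<gamma> :: "real \<Rightarrow> complex"
  assumes "\<gamma> ` {0..<1} \<subseteq> - {s}" "(\<gamma> \<longlongrightarrow> s) (at_left 1)"
  shows "filterlim \<gamma> (at s) (at_left 1)"
  unfolding filterlim_at
proof
  have "eventually (\<lambda>x::real. x \<in> {0<..<1}) (at_left 1)" by (rule eventually_at_left_real) simp
  then show "\<forall>\<^sub>F x in at_left (1::real). \<gamma> x \<in> UNIV \<and> \<gamma> x \<noteq> s"
    by (rule eventually_mono) (use assms(1) in auto)
qed (rule assms(2))

lemma ess_lemma: fixes f :: "complex \<Rightarrow> complex"
  assumes "asymptotic_value f s 0" "asymptotic_value_inf f s"
  shows "\<not> not_essential f s"
proof
  obtain \<gamma>1 :: "real \<Rightarrow> complex" where g1: "\<gamma>1 ` {0..<1} \<subseteq> - {s}" "(\<gamma>1 \<longlongrightarrow> s) (at_left 1)" "((f \<circ> \<gamma>1) \<longlongrightarrow> 0) (at_left 1)"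
    using assms(1) unfolding asymptotic_value_def by blast
  obtain \<gamma>2 :: "real \<Rightarrow> complex" where g2: "\<gamma>2 ` {0..<1} \<subseteq> - {s}" "(\<gamma>2 \<longlongrightarrow> s) (at_left 1)" "filterlim (f \<circ> \<gamma>2) at_infinity (at_left 1)"
    using assms(2) unfolding asymptotic_value_inf_def by blast
  have p1: "filterlim \<gamma>1 (at s) (at_left 1)" by (rule path_at[OF g1(1,2)])
  have p2: "filterlim \<gamma>2 (at s) (at_left 1)" by (rule path_at[OF g2(1,2)])
  assume "not_essential f s"
  then obtain x where "(f \<longlongrightarrow> x) (at s) \<or> is_pole f s" unfolding not_essential_def by blast
  then show False
  proof
    assume "(f \<longlongrightarrow> x) (at s)"
    then have "((f \<circ> \<gamma>2) \<longlongrightarrow> x) (at_left 1)" unfolding comp_def by (rule filterlim_compose[OF _ p2])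
    then show False using not_tendsto_and_filterlim_at_infinity[OF trivial_limit_at_left_real _ g2(3)] by blast
  next
    assume "is_pole f s"
    then have "filterlim (f \<circ> \<gamma>1) at_infinity (at_left 1)" unfolding is_pole_def comp_def
      by (rule filterlim_compose[OF _ p1])
    then show False using not_tendsto_and_filterlim_at_infinity[OF trivial_limit_at_left_real g1(3)] by blast
  qed
qed




lemma exp_const_disc: fixes v :: "real \<Rightarrow> complex"
  assumes S: "connected S" and c: "continuous_on S v" and e: "\<And>y. y \<in> S \<Longrightarrow> exp (v y) = L"
  shows "v constant_on S"
proof (rule continuous_discrete_range_constant[OF S c])
  fix x assume x: "x \<in> S"
  show "\<exists>e>0. \<forall>y. y \<in> S \<and> v y \<noteq> v x \<longrightarrow> e \<le> norm (v y - v x)"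
  proof (intro exI[of _ "2 * pi"] conjI allI impI)
    show "0 < 2 * pi" by simp
    fix y assume y: "y \<in> S \<and> v y \<noteq> v x"
    then have "exp (v y) = exp (v x)" using e x by simp
    then obtain n :: int where n: "v y = v x + of_int (2 * n) * pi * \<i>" using exp_eq by blast
    with y have "n \<noteq> 0" by auto
    then have "1 \<le> \<bar>real_of_int n\<bar>" by linarith
    have "norm (v y - v x) = norm (of_int (2 * n) * pi * \<i>)" using n by simp
    also have "\<dots> = 2 * pi * \<bar>real_of_int n\<bar>" by (simp add: norm_mult)
    also have "\<dots> \<ge> 2 * pi * 1" using \<open>1 \<le> \<bar>real_of_int n\<bar>\<close> by (intro mult_left_mono) auto
    finally show "2 * pi \<le> norm (v y - v x)" by simp
  qed
qed

lemma ball1_not_nonpos: fixes z :: complex assumes "z \<in> ball 1 (1/2)" shows "z \<notin> \<real>\<^sub>\<le>\<^sub>0"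
proof -
  have "\<bar>Re (1 - z)\<bar> \<le> cmod (1 - z)" by (rule abs_Re_le_cmod)
  moreover have "cmod (1 - z) < 1/2" using assms by (simp add: dist_norm)
  ultimately have "Re z > 0" by simp
  then show ?thesis by (simp add: complex_nonpos_Reals_iff)
qed

context
  fixes l :: complex
  assumes l1: "l \<noteq> pi * \<i>" and l2: "l \<noteq> - pi * \<i>"
begin

lemma a_nz: "l + pi * \<i> \<noteq> 0" using l2 by (simp add: add_eq_0_iff2) 
lemma b_nz: "l - pi * \<i> \<noteq> 0" using l1 by simp

lemma den_nz: "w \<noteq> B_lam l \<Longrightarrow> (l + pi * \<i>) * w - (l - pi * \<i>) \<noteq> 0"
  using a_nz by (auto simp: B_lam_def field_simps)

lemma B_nz: "B_lam l \<noteq> 0" using a_nz b_nz by (simp add: B_lam_def)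

lemma M_alt: "w \<noteq> B_lam l \<Longrightarrow>
  M_lam l w = - 1 / (l + pi * \<i>) + 2 * pi * \<i> / ((l + pi * \<i>)^2 * (w - B_lam l))"
  using alg1[OF a_nz den_nz, of w] unfolding M_lam_def B_lam_def by simp

lemma g_alt: "w \<noteq> B_lam l \<Longrightarrow>
  g_lam l w = w * exp (- 2 * pi * \<i> / (l + pi * \<i>)) * exp ((- 4 * pi^2 / (l + pi * \<i>)^2) / (w - B_lam l))"
proof -
  assume w: "w \<noteq> B_lam l"
  have "2 * pi * \<i> * M_lam l w = - 2 * pi * \<i> / (l + pi * \<i>) + (- 4 * pi^2 / (l + pi * \<i>)^2) / (w - B_lam l)"
    unfolding M_alt[OF w] by (simp add: field_simps power2_eq_square)
  then have "g_lam l w = w * exp (- 2 * pi * \<i> / (l + pi * \<i>) + (- 4 * pi^2 / (l + pi * \<i>)^2) / (w - B_lam l))"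
    unfolding g_lam_def by (simp only:)
  then show ?thesis by (simp only: exp_add mult.assoc)
qed

lemma M_deriv: "w \<noteq> B_lam l \<Longrightarrow>
  (M_lam l has_field_derivative (- 2 * pi * \<i> / ((l + pi * \<i>) * w - (l - pi * \<i>))^2)) (at w)"
proof -
  assume w: "w \<noteq> B_lam l"
  note d = den_nz[OF w]
  have D: "(M_lam l has_field_derivative
     (- ((l + pi * \<i>) * w - (l - pi * \<i>)) + (w - 1) * (l + pi * \<i>)) / ((l + pi * \<i>) * w - (l - pi * \<i>))^2) (at w)"
    unfolding M_lam_def[abs_def]
    by (rule derivative_eq_intros refl d | simp)+ (simp add: power2_eq_square field_simps d)
  have eq: "(- ((l + pi * \<i>) * w - (l - pi * \<i>)) + (w - 1) * (l + pi * \<i>)) = - 2 * pi * \<i>"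
    by (simp add: algebra_simps)
  show ?thesis using D unfolding eq .
qed

lemma g_deriv: fixes w :: complex assumes w: "w \<noteq> B_lam l" shows "(g_lam l has_field_derivative exp (2 * pi * \<i> * M_lam l w) *
     (1 + 4 * pi^2 * w / ((l + pi * \<i>) * w - (l - pi * \<i>))^2)) (at w)"
proof -
  note d = den_nz[OF w]
  have D: "(g_lam l has_field_derivative 1 * exp (2 * pi * \<i> * M_lam l w) + w * (exp (2 * pi * \<i> * M_lam l w) * (2 * pi * \<i> * (- 2 * pi * \<i> / ((l + pi * \<i>) * w - (l - pi * \<i>))^2)))) (at w)"
    unfolding g_lam_def[abs_def]
    by (rule DERIV_cong[OF DERIV_mult[OF DERIV_ident DERIV_chain2[OF DERIV_exp DERIV_cmult[OF M_deriv[OF w]]]]])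
       (simp add: algebra_simps)
  have eq: "1 * exp (2 * pi * \<i> * M_lam l w) + w * (exp (2 * pi * \<i> * M_lam l w) * (2 * pi * \<i> * (- 2 * pi * \<i> / ((l + pi * \<i>) * w - (l - pi * \<i>))^2)))
     = exp (2 * pi * \<i> * M_lam l w) * (1 + 4 * pi^2 * w / ((l + pi * \<i>) * w - (l - pi * \<i>))^2)"
    by (simp add: field_simps power2_eq_square)
  show ?thesis using D unfolding eq .
qed

lemma div_div_cancel: fixes x y c :: complex assumes "c \<noteq> 0" shows "x / c / (y / c) = x / y"
  using assms by (cases "y = 0") (simp_all add: field_simps)

lemma alg2: fixes a b s :: complex assumes "1 + a * s \<noteq> 0" "a - b \<noteq> 0"
  shows "- ((1 + b * s) / (1 + a * s) - 1) / (a * ((1 + b * s) / (1 + a * s)) - b) = s"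
proof -
  have n: "(1 + b * s) / (1 + a * s) - 1 = (b - a) * s / (1 + a * s)" using assms by (simp add: field_simps)
  have d0: "a * (1 + b * s) - b * (1 + a * s) = a - b" by (simp add: algebra_simps)
  have d: "a * ((1 + b * s) / (1 + a * s)) - b = (a - b) / (1 + a * s)"
    unfolding d0[symmetric] using assms(1) by (simp add: diff_divide_distrib)
  have e: "(b - a) * s / (1 + a * s) / ((a - b) / (1 + a * s)) = (b - a) * s / (a - b)"
    using assms(1) by (rule div_div_cancel)
  have f: "(b - a) * s / (a - b) = - s" using assms by (simp add: field_simps)
  show ?thesis unfolding n d using e f by simp
qed

lemma M_wstar: "1 + (l + pi * \<i>) * of_int s \<noteq> 0 \<Longrightarrow> M_lam l (wstar l s) = of_int s"
  unfolding M_lam_def wstar_def by (rule alg2) auto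

lemma wstar_ne_B: "1 + (l + pi * \<i>) * of_int s \<noteq> 0 \<Longrightarrow> wstar l s \<noteq> B_lam l"
proof
  assume h: "1 + (l + pi * \<i>) * of_int s \<noteq> 0" and e: "wstar l s = B_lam l"
  then have "(l + pi * \<i>) * (1 + (l - pi * \<i>) * of_int s) = (l - pi * \<i>) * (1 + (l + pi * \<i>) * of_int s)"
    using a_nz unfolding wstar_def B_lam_def by (simp add: field_simps)
  then have "(l + pi * \<i>) = (l - pi * \<i>)" by (simp add: algebra_simps)
  then show False by simp
qed

lemma exp_wstar: "1 + (l + pi * \<i>) * of_int s \<noteq> 0 \<Longrightarrow> exp (2 * pi * \<i> * M_lam l (wstar l s)) = 1"
proof -
  assume h: "1 + (l + pi * \<i>) * of_int s \<noteq> 0"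
  have "exp (2 * pi * \<i> * M_lam l (wstar l s)) = exp (0 + of_int (2 * s) * pi * \<i>)"
    unfolding M_wstar[OF h] by (simp add: algebra_simps)
  also have "\<dots> = exp 0" by (rule exp_eq[THEN iffD2]) auto
  finally show ?thesis by simp
qed

lemma g_wstar: "1 + (l + pi * \<i>) * of_int s \<noteq> 0 \<Longrightarrow> g_lam l (wstar l s) = wstar l s"
  unfolding g_lam_def using exp_wstar by simp

lemma fix_set: "{w. w \<noteq> B_lam l \<and> g_lam l w = w} =
        {0} \<union> {wstar l s | s. 1 + (l + pi * \<i>) * of_int s \<noteq> 0}"
proof (intro equalityI subsetI)
  fix w assume "w \<in> {w. w \<noteq> B_lam l \<and> g_lam l w = w}"
  then have wB: "w \<noteq> B_lam l" and gw: "g_lam l w = w" by auto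
  show "w \<in> {0} \<union> {wstar l s | s. 1 + (l + pi * \<i>) * of_int s \<noteq> 0}"
  proof (cases "w = 0")
    case True then show ?thesis by simp
  next
    case False
    with gw have "exp (2 * pi * \<i> * M_lam l w) = exp 0" unfolding g_lam_def by simp
    then obtain n :: int where n: "2 * pi * \<i> * M_lam l w = 0 + of_int (2 * n) * pi * \<i>"
      using exp_eq by blast
    then have Mn: "M_lam l w = of_int n" by (simp add: algebra_simps)
    note d = den_nz[OF wB]
    from Mn have e1: "- (w - 1) = of_int n * ((l + pi * \<i>) * w - (l - pi * \<i>))"
      unfolding M_lam_def using d by (simp add: field_simps)
    then have e2: "w * (1 + (l + pi * \<i>) * of_int n) = 1 + (l - pi * \<i>) * of_int n"
      by (simp add: algebra_simps)
    have nz: "1 + (l + pi * \<i>) * of_int n \<noteq> 0"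
    proof
      assume z: "1 + (l + pi * \<i>) * of_int n = 0"
      then have z2: "1 + (l - pi * \<i>) * of_int n = 0" using e2 by simp
      have "(1 + (l + pi * \<i>) * of_int n) - (1 + (l - pi * \<i>) * of_int n) = 2 * pi * \<i> * of_int n"
        by (simp add: algebra_simps)
      then have "n = 0" using z z2 by simp
      then show False using z by simp
    qed
    have "w = wstar l n" unfolding wstar_def using e2 nz by (simp add: field_simps)
    then show ?thesis using nz by blast
  qed
next
  fix w assume "w \<in> {0} \<union> {wstar l s | s. 1 + (l + pi * \<i>) * of_int s \<noteq> 0}"
  then show "w \<in> {w. w \<noteq> B_lam l \<and> g_lam l w = w}"
  proof
    assume "w \<in> {0}" then show ?thesis using B_nz by (auto simp: g_lam_def)
  next
    assume "w \<in> {wstar l s | s. 1 + (l + pi * \<i>) * of_int s \<noteq> 0}"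
    then obtain s where "w = wstar l s" "1 + (l + pi * \<i>) * of_int s \<noteq> 0" by blast
    then show ?thesis using wstar_ne_B g_wstar by auto
  qed
qed





lemma deriv_at_0: "(g_lam l has_field_derivative exp (2 * pi * \<i> / (pi * \<i> - l))) (at 0)"
proof -
  have w0: "(0::complex) \<noteq> B_lam l" using B_nz by auto
  have M0: "M_lam l 0 = 1 / (pi * \<i> - l)" unfolding M_lam_def using b_nz by (simp add: field_simps)
  show ?thesis by (rule DERIV_cong[OF g_deriv[OF w0]]) (simp add: M0)
qed

lemma alg3: fixes a b s :: complex
  assumes "1 + a * s \<noteq> 0" "a - b = 2 * pi * \<i>"
  shows "1 + 4 * pi^2 * ((1 + b * s) / (1 + a * s)) / (a * ((1 + b * s) / (1 + a * s)) - b)^2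
     = 1 - (1 + b * s) * (1 + a * s)"
proof -
  define w where "w = (1 + b * s) / (1 + a * s)"
  have d0: "a * (1 + b * s) - b * (1 + a * s) = a - b" by (simp add: algebra_simps)
  have d: "a * w - b = (a - b) / (1 + a * s)"
    unfolding d0[symmetric] w_def using assms(1) by (simp add: diff_divide_distrib)
  have sq: "(a - b)^2 = - 4 * pi^2" unfolding assms(2) by (simp add: power2_eq_square algebra_simps)
  have sq2: "(a * w - b)^2 = - 4 * pi^2 / (1 + a * s)^2" unfolding d power_divide sq ..
  have c: "(1 + a * s)^2 \<noteq> 0" using assms(1) by simp
  have e: "4 * pi^2 * w / (a * w - b)^2 = - (w * (1 + a * s)^2)"
    unfolding sq2 using c by (simp add: field_simps)
  have f: "w * (1 + a * s)^2 = (1 + b * s) * (1 + a * s)"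
    unfolding w_def using assms(1) by (simp add: power2_eq_square)
  show ?thesis using e f unfolding w_def[symmetric] by simp
qed

lemma deriv_wstar: "1 + (l + pi * \<i>) * of_int s \<noteq> 0 \<Longrightarrow>
   (g_lam l has_field_derivative
           (1 - (1 + (l - pi * \<i>) * of_int s) * (1 + (l + pi * \<i>) * of_int s))) (at (wstar l s))"
proof -
  assume h: "1 + (l + pi * \<i>) * of_int s \<noteq> 0"
  have A: "1 + 4 * pi^2 * wstar l s / ((l + pi * \<i>) * wstar l s - (l - pi * \<i>))^2
     = 1 - (1 + (l - pi * \<i>) * of_int s) * (1 + (l + pi * \<i>) * of_int s)"
    unfolding wstar_def by (rule alg3[OF h]) simp
  show ?thesis by (rule DERIV_cong[OF g_deriv[OF wstar_ne_B[OF h]]]) (simp only: exp_wstar[OF h] A mult_1)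
qed





lemma crit_eq: "(((l + pi * \<i>) * w - (l - pi * \<i>))^2 + 4 * pi^2 * (w::complex))
   = ((l + pi * \<i>)^2 * w - (l - pi * \<i>)^2) * (w - 1)"
  by (simp add: power2_eq_square algebra_simps)

lemma crit_set: "{w. w \<noteq> B_lam l \<and> deriv (g_lam l) w = 0} = {wstar l 0, (B_lam l)\<^sup>2}"
proof (intro equalityI subsetI)
  fix w assume "w \<in> {w. w \<noteq> B_lam l \<and> deriv (g_lam l) w = 0}"
  then have wB: "w \<noteq> B_lam l" and dw: "deriv (g_lam l) w = 0" by auto
  note d = den_nz[OF wB]
  have "1 + 4 * pi^2 * w / ((l + pi * \<i>) * w - (l - pi * \<i>))^2 = 0"
    using dw DERIV_imp_deriv[OF g_deriv[OF wB]] by simp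
  then have "((l + pi * \<i>) * w - (l - pi * \<i>))^2 + 4 * pi^2 * w = 0"
    using d by (simp add: field_simps)
  then have "((l + pi * \<i>)^2 * w - (l - pi * \<i>)^2) * (w - 1) = 0" by (simp only: crit_eq)
  then have "(l + pi * \<i>)^2 * w - (l - pi * \<i>)^2 = 0 \<or> w - 1 = 0" by simp
  then have "w = (B_lam l)^2 \<or> w = 1"
  proof
    assume "(l + pi * \<i>)^2 * w - (l - pi * \<i>)^2 = 0"
    then have "w = (l - pi * \<i>)^2 / (l + pi * \<i>)^2" using a_nz by (simp add: field_simps)
    then show ?thesis by (simp add: B_lam_def power_divide)
  qed simp
  then show "w \<in> {wstar l 0, (B_lam l)\<^sup>2}" by (auto simp: wstar_def)
next
  fix w assume "w \<in> {wstar l 0, (B_lam l)\<^sup>2}"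
  then have w: "w = 1 \<or> w = (B_lam l)^2" by (auto simp: wstar_def)
  have wB: "w \<noteq> B_lam l"
  proof
    assume e: "w = B_lam l"
    from w show False
    proof
      assume "w = 1"
      then have "l + pi * \<i> = l - pi * \<i>" using e a_nz by (simp add: B_lam_def field_simps)
      then show False by simp
    next
      assume "w = (B_lam l)^2"
      then have "B_lam l * (B_lam l - 1) = 0" using e by (simp add: power2_eq_square algebra_simps)
      then have "B_lam l = 1" using B_nz by simp
      then have "l + pi * \<i> = l - pi * \<i>" using a_nz by (simp add: B_lam_def field_simps)
      then show False by simp
    qed
  qed
  note d = den_nz[OF wB]
  have "((l + pi * \<i>)^2 * w - (l - pi * \<i>)^2) * (w - 1) = 0"
    using w a_nz by (auto simp: B_lam_def power_divide field_simps)
  then have "((l + pi * \<i>) * w - (l - pi * \<i>))^2 + 4 * pi^2 * w = 0" by (simp only: crit_eq)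
  then have "1 + 4 * pi^2 * w / ((l + pi * \<i>) * w - (l - pi * \<i>))^2 = 0"
    using d by (simp add: field_simps)
  then have "deriv (g_lam l) w = 0" using DERIV_imp_deriv[OF g_deriv[OF wB]] by simp
  then show "w \<in> {w. w \<noteq> B_lam l \<and> deriv (g_lam l) w = 0}" using wB by simp
qed





lemma chart_deriv: "(chart_inf (g_lam l) has_field_derivative exp (2 * pi * \<i> / (pi * \<i> + l))) (at 0)"
proof -
  define H where "H = (\<lambda>z. z * exp (2 * pi * \<i> * ((1 - z) / ((l + pi * \<i>) - (l - pi * \<i>) * z))))"
  define S where "S = ball (0::complex) (norm (l + pi * \<i>) / norm (l - pi * \<i>))"
  have DH: "(H has_field_derivative exp (2 * pi * \<i> / (pi * \<i> + l))) (at 0)"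
  proof -
    have g0: "(l + pi * \<i>) - (l - pi * \<i>) * 0 \<noteq> 0" using a_nz by simp
    note Dq = DERIV_divide[OF DERIV_diff[OF DERIV_const DERIV_ident] DERIV_diff[OF DERIV_const DERIV_cmult[OF DERIV_ident]] g0]
    note D = DERIV_mult[OF DERIV_ident DERIV_chain2[OF DERIV_exp DERIV_cmult[OF Dq]], of "2 * pi * \<i>"]
    show ?thesis unfolding H_def by (rule DERIV_cong[OF D]) (simp add: add.commute)
  qed
  show ?thesis
  proof (rule has_field_derivative_transform_within_open[OF DH])
    show "open S" "0 \<in> S" unfolding S_def using a_nz b_nz by auto
    fix z assume z: "z \<in> S"
    have nz: "(l + pi * \<i>) - (l - pi * \<i>) * z \<noteq> 0"
    proof
      assume "(l + pi * \<i>) - (l - pi * \<i>) * z = 0"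
      then have "norm (l + pi * \<i>) = norm (l - pi * \<i>) * norm z" by (simp add: norm_mult)
      moreover have "norm z < norm (l + pi * \<i>) / norm (l - pi * \<i>)" using z unfolding S_def by simp
      ultimately show False using b_nz by (simp add: field_simps)
    qed
    show "H z = chart_inf (g_lam l) z"
    proof (cases "z = 0")
      case True then show ?thesis by (simp add: H_def chart_inf_def)
    next
      case False
      have M: "M_lam l (inverse z) = - ((1 - z) / ((l + pi * \<i>) - (l - pi * \<i>) * z))"
      proof -
        have n: "inverse z - 1 = (1 - z) / z" using False by (simp add: field_simps)
        have d: "(l + pi * \<i>) * inverse z - (l - pi * \<i>) = ((l + pi * \<i>) - (l - pi * \<i>) * z) / z"
          using False by (simp add: field_simps)
        show ?thesis unfolding M_lam_def n d minus_divide_left[symmetric] div_div_cancel[OF False] ..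
      qed
      show ?thesis unfolding H_def chart_inf_def g_lam_def M using False
        by (simp add: exp_minus[symmetric])
    qed
  qed
qed





lemma g_path: fixes t :: real and e :: real assumes "t < 1" "e = 1 \<or> e = -1"
  shows "g_lam l (B_lam l + of_real (e * (1 - t)) / (l + pi * \<i>)^2)
     = (B_lam l + of_real (e * (1 - t)) / (l + pi * \<i>)^2) * exp (- 2 * pi * \<i> / (l + pi * \<i>))
       * of_real (exp (- e * (4 * pi^2 / (1 - t))))"
proof -
  have a2: "(l + pi * \<i>)^2 \<noteq> 0" using a_nz by simp
  have ne: "of_real (e * (1 - t)) / (l + pi * \<i>)^2 \<noteq> 0" using assms a2 by auto
  have w: "B_lam l + of_real (e * (1 - t)) / (l + pi * \<i>)^2 \<noteq> B_lam l" using ne by simp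
  have k: "(- 4 * pi^2 / (l + pi * \<i>)^2) / (B_lam l + of_real (e * (1 - t)) / (l + pi * \<i>)^2 - B_lam l)
     = of_real (- e * (4 * pi^2 / (1 - t)))"
    using a2 assms by (auto simp: field_simps)
  show ?thesis unfolding g_alt[OF w] k exp_of_real ..
qed

lemma ev_lt1: "eventually (\<lambda>t::real. t < 1) (at_left 1)"
proof -
  have "eventually (\<lambda>x::real. x \<in> {0<..<1}) (at_left 1)" by (rule eventually_at_left_real) simp
  then show ?thesis by (rule eventually_mono) simp
qed

lemma asym0: "asymptotic_value (g_lam l) (B_lam l) 0"
proof -
  define \<gamma> where "\<gamma> = (\<lambda>t::real. B_lam l + of_real (1 * (1 - t)) / (l + pi * \<i>)^2)"
  have a2: "(l + pi * \<i>)^2 \<noteq> 0" using a_nz by simp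
  have c1: "continuous_on {0..<1} \<gamma>" unfolding \<gamma>_def by (intro continuous_intros) (use a2 in auto)
  have c2: "\<gamma> ` {0..<1} \<subseteq> - {B_lam l}"
  proof
    fix x assume "x \<in> \<gamma> ` {0..<1}"
    then obtain t where t: "t \<in> {0..<1}" "x = \<gamma> t" by blast
    then have "of_real (1 - t) / (l + pi * \<i>)^2 \<noteq> 0" using a2 by simp
    then show "x \<in> - {B_lam l}" using t by (simp add: \<gamma>_def)
  qed
  have "(\<gamma> \<longlongrightarrow> B_lam l + of_real (1 * (1 - 1)) / (l + pi * \<i>)^2) (at_left 1)"
    unfolding \<gamma>_def by (intro tendsto_intros) (use a2 in simp)
  then have gl: "(\<gamma> \<longlongrightarrow> B_lam l) (at_left 1)" by simp
  have "((\<lambda>t. \<gamma> t * exp (- 2 * pi * \<i> / (l + pi * \<i>)) * of_real (exp (- (4 * pi^2 / (1 - t)))))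
      \<longlongrightarrow> B_lam l * exp (- 2 * pi * \<i> / (l + pi * \<i>)) * of_real 0) (at_left 1)"
    by (rule tendsto_mult[OF tendsto_mult[OF gl tendsto_const] tendsto_of_real[OF lim_exp_neg]])
  then have L: "((\<lambda>t. \<gamma> t * exp (- 2 * pi * \<i> / (l + pi * \<i>)) * of_real (exp (- (4 * pi^2 / (1 - t)))))
      \<longlongrightarrow> 0) (at_left 1)" by simp
  have ev: "\<forall>\<^sub>F t in at_left 1. \<gamma> t * exp (- 2 * pi * \<i> / (l + pi * \<i>)) * of_real (exp (- (4 * pi^2 / (1 - t))))
     = g_lam l (\<gamma> t)"
    by (rule eventually_mono[OF ev_lt1]) (use g_path[of _ 1] in \<open>simp add: \<gamma>_def\<close>)
  have "((\<lambda>t. g_lam l (\<gamma> t)) \<longlongrightarrow> 0) (at_left 1)" using L by (rule tendsto_cong[OF ev, THEN iffD1])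
  then have c3: "((g_lam l \<circ> \<gamma>) \<longlongrightarrow> 0) (at_left 1)" unfolding comp_def .
  show ?thesis unfolding asymptotic_value_def by (intro exI[of _ \<gamma>] conjI c1 c2 gl c3)
qed

lemma asyminf: "asymptotic_value_inf (g_lam l) (B_lam l)"
proof -
  define \<gamma> where "\<gamma> = (\<lambda>t::real. B_lam l + of_real ((- 1) * (1 - t)) / (l + pi * \<i>)^2)"
  have a2: "(l + pi * \<i>)^2 \<noteq> 0" using a_nz by simp
  have c1: "continuous_on {0..<1} \<gamma>" unfolding \<gamma>_def by (intro continuous_intros) (use a2 in auto)
  have c2: "\<gamma> ` {0..<1} \<subseteq> - {B_lam l}"
  proof
    fix x assume "x \<in> \<gamma> ` {0..<1}"
    then obtain t where t: "t \<in> {0..<1}" "x = \<gamma> t" by blast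
    then have "of_real (1 - t) / (l + pi * \<i>)^2 \<noteq> 0" using a2 by simp
    then show "x \<in> - {B_lam l}" using t by (simp add: \<gamma>_def)
  qed
  have "(\<gamma> \<longlongrightarrow> B_lam l + of_real ((- 1) * (1 - 1)) / (l + pi * \<i>)^2) (at_left 1)"
    unfolding \<gamma>_def by (intro tendsto_intros) (use a2 in simp)
  then have gl: "(\<gamma> \<longlongrightarrow> B_lam l) (at_left 1)" by simp
  have c: "B_lam l * exp (- 2 * pi * \<i> / (l + pi * \<i>)) \<noteq> 0" using B_nz by simp
  have E: "filterlim (\<lambda>t. complex_of_real (exp (4 * pi^2 / (1 - t)))) at_infinity (at_left 1)"
    unfolding filterlim_at_infinity_conv_norm_at_top norm_of_real by (simp add: lim_exp_pos)
  have L: "filterlim (\<lambda>t. \<gamma> t * exp (- 2 * pi * \<i> / (l + pi * \<i>)) * of_real (exp (4 * pi^2 / (1 - t))))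
      at_infinity (at_left 1)"
    by (rule tendsto_mult_filterlim_at_infinity[OF tendsto_mult[OF gl tendsto_const] c E])
  have ev: "\<forall>\<^sub>F t in at_left 1. \<gamma> t * exp (- 2 * pi * \<i> / (l + pi * \<i>)) * of_real (exp (4 * pi^2 / (1 - t)))
     = g_lam l (\<gamma> t)"
    by (rule eventually_mono[OF ev_lt1]) (use g_path[of _ "-1"] in \<open>simp add: \<gamma>_def\<close>)
  have "filterlim (\<lambda>t. g_lam l (\<gamma> t)) at_infinity (at_left 1)" using L by (rule filterlim_cong[OF refl refl ev, THEN iffD1])
  then have c3: "filterlim (g_lam l \<circ> \<gamma>) at_infinity (at_left 1)" unfolding comp_def .
  show ?thesis unfolding asymptotic_value_inf_def by (intro exI[of _ \<gamma>] conjI c1 c2 gl c3)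
qed

lemma not_ess: "\<not> not_essential (g_lam l) (B_lam l)"
  by (rule ess_lemma[OF asym0 asyminf])



lemma g_inf: "filterlim (g_lam l) at_infinity at_infinity"
proof -
  have ev: "\<forall>\<^sub>F w in at_infinity. exp (2 * pi * \<i> * (- (1 - inverse w) / ((l + pi * \<i>) - (l - pi * \<i>) * inverse w))) * w
     = g_lam l w"
  proof -
    have "\<forall>\<^sub>F w in at_infinity. (w::complex) \<noteq> 0"
      unfolding eventually_at_infinity by (intro exI[of _ 1]) auto
    then show ?thesis
    proof (rule eventually_mono)
      fix w :: complex assume w: "w \<noteq> 0"
      have n: "w - 1 = (1 - inverse w) * w" using w by (simp add: field_simps)
      have d: "(l + pi * \<i>) * w - (l - pi * \<i>) = ((l + pi * \<i>) - (l - pi * \<i>) * inverse w) * w"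
        using w by (simp add: field_simps)
      have "M_lam l w = - (1 - inverse w) / ((l + pi * \<i>) - (l - pi * \<i>) * inverse w)"
        unfolding M_lam_def n d using w by (simp add: minus_divide_left)
      then show "exp (2 * pi * \<i> * (- (1 - inverse w) / ((l + pi * \<i>) - (l - pi * \<i>) * inverse w))) * w
     = g_lam l w" unfolding g_lam_def by (simp add: mult.commute)
    qed
  qed
  have T: "((\<lambda>w. exp (2 * pi * \<i> * (- (1 - inverse w) / ((l + pi * \<i>) - (l - pi * \<i>) * inverse w))))
      \<longlongrightarrow> exp (2 * pi * \<i> * (- (1 - 0) / ((l + pi * \<i>) - (l - pi * \<i>) * 0)))) at_infinity"
    using a_nz by (intro tendsto_intros tendsto_inverse_0) auto
  have L: "filterlim (\<lambda>w. exp (2 * pi * \<i> * (- (1 - inverse w) / ((l + pi * \<i>) - (l - pi * \<i>) * inverse w))) * w)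
     at_infinity at_infinity"
    by (rule tendsto_mult_filterlim_at_infinity[OF T]) (simp_all add: filterlim_ident)
  show ?thesis using L filterlim_cong[OF refl refl ev] by simp
qed

lemma pole_inv: "not_essential (\<lambda>z. g_lam l (inverse z)) 0"
proof -
  have "filterlim (\<lambda>z. g_lam l (inverse z)) at_infinity (at 0)"
    by (rule filterlim_compose[OF g_inf filterlim_inverse_at_infinity])
  then show ?thesis unfolding not_essential_def is_pole_def by blast
qed

lemma g_holo: "g_lam l holomorphic_on (- {B_lam l})"
  using g_deriv by (subst holomorphic_on_open) auto

lemma g_isol: "isolated_singularity_at (g_lam l) (B_lam l)"
  by (rule isolated_singularity_at_holomorphic[of _ UNIV]) (use g_holo in \<open>simp_all add: Compl_eq_Diff_UNIV\<close>)





lemma asym_only0: assumes "asymptotic_value (g_lam l) (B_lam l) A" shows "A = 0"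
proof (rule ccontr)
  assume A: "A \<noteq> 0"
  obtain \<gamma> :: "real \<Rightarrow> complex" where gc: "continuous_on {0..<1} \<gamma>" and gi: "\<gamma> ` {0..<1} \<subseteq> - {B_lam l}"
    and gl: "(\<gamma> \<longlongrightarrow> B_lam l) (at_left 1)" and gA: "((g_lam l \<circ> \<gamma>) \<longlongrightarrow> A) (at_left 1)"
    using assms unfolding asymptotic_value_def by blast
  define K where "K = - 4 * pi^2 / (l + pi * \<i>)^2"
  define c where "c = exp (- 2 * pi * \<i> / (l + pi * \<i>))"
  define u where "u = (\<lambda>t. K * inverse (\<gamma> t - B_lam l))"
  define L where "L = A / (B_lam l * c)"
  have K0: "K \<noteq> 0" unfolding K_def using a_nz by simp
  have c0: "c \<noteq> 0" unfolding c_def by simp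
  have L0: "L \<noteq> 0" unfolding L_def using A B_nz c0 by simp
  have gform: "g_lam l (\<gamma> t) = \<gamma> t * c * exp (u t)" if t: "t \<in> {0..<1}" for t
  proof -
    have "\<gamma> t \<in> - {B_lam l}" using gi t by blast
    then have "\<gamma> t \<noteq> B_lam l" by simp
    then show ?thesis unfolding g_alt[OF \<open>\<gamma> t \<noteq> B_lam l\<close>] u_def c_def K_def by (simp add: divide_inverse)
  qed
  have ev01: "eventually (\<lambda>t::real. t \<in> {0<..<1}) (at_left 1)" by (rule eventually_at_left_real) simp
  have evne: "eventually (\<lambda>t. \<gamma> t \<noteq> 0) (at_left 1)" by (rule tendsto_imp_eventually_ne[OF gl B_nz])
  have E: "((\<lambda>t. exp (u t)) \<longlongrightarrow> L) (at_left 1)"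
  proof -
    have T: "((\<lambda>t. g_lam l (\<gamma> t) / (\<gamma> t * c)) \<longlongrightarrow> A / (B_lam l * c)) (at_left 1)"
      using gA B_nz c0 unfolding comp_def by (intro tendsto_divide tendsto_mult gl tendsto_const) auto
    have Ev: "eventually (\<lambda>t. g_lam l (\<gamma> t) / (\<gamma> t * c) = exp (u t)) (at_left 1)"
      using ev01 evne
    proof eventually_elim
      case (elim t)
      then show ?case using gform[of t] c0 by simp
    qed
    show ?thesis unfolding L_def using T by (rule tendsto_cong[OF Ev, THEN iffD1])
  qed
  have U: "filterlim u at_infinity (at_left 1)"
  proof -
    have f0: "filterlim (\<lambda>t. \<gamma> t - B_lam l) (at 0) (at_left 1)"
      unfolding filterlim_at
    proof
      show "\<forall>\<^sub>F t in at_left (1::real). \<gamma> t - B_lam l \<in> UNIV \<and> \<gamma> t - B_lam l \<noteq> 0"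
      proof (rule eventually_mono[OF ev01])
        fix t :: real assume "t \<in> {0<..<1}"
        then have "t \<in> {0..<1}" by simp
        then have "\<gamma> t \<in> - {B_lam l}" using gi by blast
        then show "\<gamma> t - B_lam l \<in> UNIV \<and> \<gamma> t - B_lam l \<noteq> 0" by simp
      qed
      have "((\<lambda>t. \<gamma> t - B_lam l) \<longlongrightarrow> B_lam l - B_lam l) (at_left 1)" by (intro tendsto_intros gl)
      then show "((\<lambda>t. \<gamma> t - B_lam l) \<longlongrightarrow> 0) (at_left 1)" by simp
    qed
    have "filterlim (\<lambda>t. inverse (\<gamma> t - B_lam l)) at_infinity (at_left 1)"
      by (rule filterlim_compose[OF filterlim_inverse_at_infinity f0])
    then show ?thesis unfolding u_def by (rule tendsto_mult_filterlim_at_infinity[OF tendsto_const K0])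
  qed
  have "eventually (\<lambda>t. exp (u t) / L \<in> ball 1 (1/2)) (at_left 1)"
  proof (rule topological_tendstoD)
    show "((\<lambda>t. exp (u t) / L) \<longlongrightarrow> 1) (at_left 1)" using tendsto_divide[OF E tendsto_const L0] L0 by simp
  qed auto
  with ev01 have "eventually (\<lambda>t. t \<in> {0<..<1} \<and> exp (u t) / L \<in> ball 1 (1/2)) (at_left 1)"
    by (rule eventually_conj)
  then obtain b :: real where b: "b < 1" and bP: "\<And>y. b < y \<Longrightarrow> y < 1 \<Longrightarrow> y \<in> {0<..<1} \<and> exp (u y) / L \<in> ball 1 (1/2)"
    unfolding eventually_at_left_field by blast
  define S where "S = {b<..<1}"
  define v where "v = (\<lambda>y. u y - Ln (exp (u y) / L))"
  have SP: "y \<in> {0<..<1}" "exp (u y) / L \<in> ball 1 (1/2)" if "y \<in> S" for y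
    using bP that unfolding S_def by auto
  have Sg: "\<gamma> y - B_lam l \<noteq> 0" if "y \<in> S" for y
  proof -
    have "y \<in> {0..<1}" using SP(1)[OF that] by simp
    then have "\<gamma> y \<in> - {B_lam l}" using gi by blast
    then show ?thesis by simp
  qed
  have cu: "continuous_on S u"
  proof -
    have S01: "S \<subseteq> {0..<1}"
    proof
      fix y assume "y \<in> S" then show "y \<in> {0..<1}" using SP(1)[of y] by simp
    qed
    have "continuous_on S \<gamma>" by (rule continuous_on_subset[OF gc S01])
    then show ?thesis unfolding u_def by (intro continuous_intros) (use Sg in auto)
  qed
  have cv: "continuous_on S v" unfolding v_def
    by (intro continuous_intros cu) (use SP(2) ball1_not_nonpos L0 in auto)
  have ev: "exp (v y) = L" if "y \<in> S" for y
  proof -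
    have nz: "exp (u y) / L \<noteq> 0" using L0 by simp
    show ?thesis unfolding v_def exp_diff exp_Ln[OF nz] using L0 by simp
  qed
  have "v constant_on S" by (rule exp_const_disc[OF _ cv ev]) (simp add: S_def)
  then obtain v0 where v0: "\<And>y. y \<in> S \<Longrightarrow> v y = v0" unfolding constant_on_def by blast
  have evS: "eventually (\<lambda>y. y \<in> S) (at_left 1)" unfolding S_def by (rule eventually_at_left_real[OF b])
  have Ev2: "eventually (\<lambda>y. v0 + Ln (exp (u y) / L) = u y) (at_left 1)"
  proof (rule eventually_mono[OF evS])
    fix y assume "y \<in> S"
    then have "u y - Ln (exp (u y) / L) = v0" using v0[of y] unfolding v_def by simp
    then show "v0 + Ln (exp (u y) / L) = u y" by (simp add: algebra_simps)
  qed
  have "((\<lambda>y. v0 + Ln (exp (u y) / L)) \<longlongrightarrow> v0 + Ln (L / L)) (at_left 1)"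
    using L0 by (intro tendsto_intros E) auto
  then have T2: "((\<lambda>y. v0 + Ln (exp (u y) / L)) \<longlongrightarrow> v0) (at_left 1)" using L0 by simp
  have "((\<lambda>y. u y) \<longlongrightarrow> v0) (at_left 1)" using T2 by (rule tendsto_cong[OF Ev2, THEN iffD1])
  then have "(u \<longlongrightarrow> v0) (at_left 1)" by simp
  then show False using not_tendsto_and_filterlim_at_infinity[OF trivial_limit_at_left_real _ U] by blast
qed


lemma sing_vals: "singular_values_fin (g_lam l) (- {B_lam l}) (B_lam l) = {0, wstar l 0, g_lam l ((B_lam l)\<^sup>2)}"
proof -
  have cv: "critical_values (g_lam l) (- {B_lam l}) = g_lam l ` {w. w \<noteq> B_lam l \<and> deriv (g_lam l) w = 0}"
    unfolding critical_values_def by auto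
  have w0: "g_lam l (wstar l 0) = wstar l 0" using g_wstar[of 0] by simp
  have av: "{a. asymptotic_value (g_lam l) (B_lam l) a} = {0}"
    using asym0 asym_only0 by blast
  have U: "critical_values (g_lam l) (- {B_lam l}) \<union> {a. asymptotic_value (g_lam l) (B_lam l) a}
      = {0, wstar l 0, g_lam l ((B_lam l)\<^sup>2)}"
    unfolding cv crit_set av using w0 by auto
  show ?thesis unfolding singular_values_fin_def U by (rule closure_closed) (rule finite_imp_closed, simp)
qed

lemma inf_sing: "infinity_singular (g_lam l) (- {B_lam l}) (B_lam l)"
  unfolding infinity_singular_def using asyminf by blast

end

theorem lemma5p5:
  fixes l :: complex
  assumes "l \<noteq> pi * \<i>" and "l \<noteq> - pi * \<i>"
  shows
    "g_lam l holomorphic_on (- {B_lam l}) \<and>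
     isolated_singularity_at (g_lam l) (B_lam l) \<and>
     \<not> not_essential (g_lam l) (B_lam l) \<and>
     filterlim (g_lam l) at_infinity at_infinity \<and>
     not_essential (\<lambda>z. g_lam l (inverse z)) 0 \<and>
     {w. w \<noteq> B_lam l \<and> g_lam l w = w} =
        {0} \<union> {wstar l s | s. 1 + (l + pi * \<i>) * of_int s \<noteq> 0} \<and>
     (g_lam l has_field_derivative exp (2 * pi * \<i> / (pi * \<i> - l))) (at 0) \<and>
     (chart_inf (g_lam l) has_field_derivative exp (2 * pi * \<i> / (pi * \<i> + l))) (at 0) \<and>
     (\<forall>s::int. 1 + (l + pi * \<i>) * of_int s \<noteq> 0 \<longrightarrow>
        (g_lam l has_field_derivative
           (1 - (1 + (l - pi * \<i>) * of_int s) * (1 + (l + pi * \<i>) * of_int s))) (at (wstar l s))) \<and>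
     {w. w \<noteq> B_lam l \<and> deriv (g_lam l) w = 0} = {wstar l 0, (B_lam l)\<^sup>2} \<and>
     asymptotic_value (g_lam l) (B_lam l) 0 \<and>
     asymptotic_value_inf (g_lam l) (B_lam l) \<and>
     singular_values_fin (g_lam l) (- {B_lam l}) (B_lam l) = {0, wstar l 0, g_lam l ((B_lam l)\<^sup>2)} \<and>
     infinity_singular (g_lam l) (- {B_lam l}) (B_lam l)"
  using g_holo[OF assms] g_isol[OF assms] not_ess[OF assms] g_inf[OF assms] pole_inv[OF assms]
    fix_set[OF assms] deriv_at_0[OF assms] chart_deriv[OF assms] deriv_wstar[OF assms] crit_set[OF assms]
    asym0[OF assms] asyminf[OF assms] sing_vals[OF assms] inf_sing[OF assms]
  by blast

end
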